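(* Consider the Gaussian broadcast model on $P=\mathcal{HS}_2$ with $\alpha_2=1/2$. Let $M,t$ be positive integers with $M\ge2^5$ and $t\ge2^{11}M^3$. Then for all integers $i,j$ with $|i-j|\le2M$, $$\sqrt t\ge\operatorname{Var}\big(X_{(i,t-i)}\big)\ge\operatorname{Cov}\big(X_{(i,t-i)},X_{(j,t-j)}\big)\ge\frac{\sqrt t}{50}.$$
   Context: Infinite model: $\mathcal{HS}_{d+1}=\{(x_1,\dots,x_{d+1})\in\mathbb Z^{d+1}:x_1+\dots+x_{d+1}\ge0\}$ with $u\le v$ iff $v-u\in\mathbb Z_{\ge0}^{d+1}$; layer $L_t$ = points with coordinate sum $t$; each point $v$ of rank $\ge1$ covers exactly the $d+1$ points $v-e_i$ (the set $\mathfrak p(v)$). Gaussian broadcast model: $X_0\sim\mathcal N(0,1)$; independently, i.i.d. $W_{u\to v}\sim\mathcal N(0,1)$ for covering pairs $u\lessdot v$; $X_v=X_0$ for every $v\in L_0$; and $X_v=\alpha_{d+1}\sum_{u\in\mathfrak p(v)}(X_u+W_{u\to v})$ for $v$ of rank $\ge1$. Here $d=1$. *)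

theory Defs
  imports "HOL-Probability.Probability"
begin

definition covariance :: "'a measure \<Rightarrow> ('a \<Rightarrow> real) \<Rightarrow> ('a \<Rightarrow> real) \<Rightarrow> real" where
  "covariance M X Y =
     (\<integral>\<omega>. (X \<omega> - (\<integral>\<eta>. X \<eta> \<partial>M)) * (Y \<omega> - (\<integral>\<eta>. Y \<eta> \<partial>M)) \<partial>M)"

text \<open>Points of HS_2 are pairs of integers (a,b) with a+b \<ge> 0; the rank is a+b.
  The noise variables are indexed by
    None                 : the root variable X_0,
    Some ((a,b), True)   : W on the edge (a-1,b) \<lessdot> (a,b),
    Some ((a,b), False)  : W on the edge (a,b-1) \<lessdot> (a,b),
  for (a,b) of rank \<ge> 1.\<close>
definition HS2_noise_index :: "((int \<times> int) \<times> bool) option set" where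
  "HS2_noise_index = {None} \<union> {Some ((a,b),c) | a b c. a + b \<ge> 1}"

definition gaussian_broadcast_HS2 ::
  "'s measure \<Rightarrow> (((int \<times> int) \<times> bool) option \<Rightarrow> 's \<Rightarrow> real) \<Rightarrow> (int \<times> int \<Rightarrow> 's \<Rightarrow> real) \<Rightarrow> bool"
where
  "gaussian_broadcast_HS2 M Z X \<longleftrightarrow>
     prob_space M \<and>
     prob_space.indep_vars M (\<lambda>_. borel) Z HS2_noise_index \<and>
     (\<forall>i\<in>HS2_noise_index. distributed M lborel (Z i) std_normal_density) \<and>
     (\<forall>a b. a + b = 0 \<longrightarrow> X (a,b) = Z None) \<and>
     (\<forall>a b. a + b \<ge> 1 \<longrightarrow>
        (\<forall>\<omega>. X (a,b) \<omega> = (1/2) *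
            ((X (a-1,b) \<omega> + Z (Some ((a,b),True)) \<omega>) +
             (X (a,b-1) \<omega> + Z (Some ((a,b),False)) \<omega>))))"

end

theory Submission
  imports Defs
begin


definition bc :: "nat \<Rightarrow> int \<Rightarrow> real" where
  "bc n k = (if k < 0 then 0 else real (n choose nat k))"

lemma bc_0: "bc 0 k = (if k = 0 then 1 else 0)"
  by (auto simp: bc_def)

lemma bc_Suc: "bc (Suc n) (k+1) = bc n k + bc n (k+1)"
proof (cases "k \<ge> 0")
  case True
  then have "nat (k+1) = Suc (nat k)" by simp
  then show ?thesis using True by (simp add: bc_def)
next
  case False
  then show ?thesis by (cases "k = -1") (auto simp: bc_def)
qed

lemma bc_step: "bc (2 * Suc n) (int (Suc n) + d) =
   bc (2*n) (int n + (d-1)) + 2 * bc (2*n) (int n + d) + bc (2*n) (int n + (d+1))"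
proof -
  have "bc (2 * Suc n) (int (Suc n) + d) = bc (Suc (Suc (2*n))) ((int n + d) + 1)"
    by (simp add: algebra_simps)
  also have "\<dots> = bc (Suc (2*n)) (int n + d) + bc (Suc (2*n)) ((int n + d) + 1)"
    by (rule bc_Suc)
  also have "bc (Suc (2*n)) (int n + d) = bc (2*n) (int n + (d-1)) + bc (2*n) (int n + d)"
    using bc_Suc[of "2*n" "int n + (d - 1)"] by (simp add: algebra_simps)
  also have "bc (Suc (2*n)) ((int n + d) + 1) = bc (2*n) (int n + d) + bc (2*n) (int n + (d+1))"
    using bc_Suc[of "2*n" "int n + d"] by (simp add: algebra_simps)
  finally show ?thesis by simp
qed

definition cf :: "nat \<Rightarrow> int \<Rightarrow> real" where
  "cf t d = 1 + (1/2) * (\<Sum>n<t. bc (2*n) (int n + d) / 4^n)"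

lemma cf_0: "cf 0 d = 1" by (simp add: cf_def)

lemma cf_Suc: "cf (Suc t) d = (cf t (d-1) + 2 * cf t d + cf t (d+1)) / 4 + (if d = 0 then 1/2 else 0)"
proof -
  have "(\<Sum>n<Suc t. bc (2*n) (int n + d) / 4^n) =
        (\<Sum>n<t. bc (2*Suc n) (int (Suc n) + d) / 4^(Suc n)) + bc 0 d"
    by (subst sum.lessThan_Suc_shift) simp
  also have "(\<Sum>n<t. bc (2*Suc n) (int (Suc n) + d) / 4^(Suc n)) =
     ((\<Sum>n<t. bc (2*n) (int n + (d-1)) / 4^n) + 2 * (\<Sum>n<t. bc (2*n) (int n + d) / 4^n)
       + (\<Sum>n<t. bc (2*n) (int n + (d+1)) / 4^n)) / 4"
  proof -
    have "\<And>n. bc (2*Suc n) (int (Suc n) + d) / 4^(Suc n) =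
       (bc (2*n) (int n + (d-1)) / 4^n + 2 * (bc (2*n) (int n + d) / 4^n) + bc (2*n) (int n + (d+1)) / 4^n) / 4"
      by (subst bc_step) (simp add: field_simps)
    note eq = this
    show ?thesis
      apply (subst sum.cong[OF refl eq])
      apply (simp only: sum_divide_distrib[symmetric] sum.distrib sum_distrib_left[symmetric])
      done
  qed
  finally have S: "(\<Sum>n<Suc t. bc (2*n) (int n + d) / 4^n) = ((\<Sum>n<t. bc (2*n) (int n + (d-1)) / 4^n) + 2 * (\<Sum>n<t. bc (2*n) (int n + d) / 4^n)
       + (\<Sum>n<t. bc (2*n) (int n + (d+1)) / 4^n)) / 4 + bc 0 d" .
  show ?thesis
    apply (simp only: cf_def S)
    apply (simp add: bc_0 field_simps)
    done
qed

lemma bc_le_central: "bc (2*n) k \<le> real ((2*n) choose n)"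
  by (auto simp: bc_def binomial_maximum')

lemma bc_nonneg: "bc n k \<ge> 0" by (simp add: bc_def)

lemma bc_sym: "bc (2*n) (int n + d) = bc (2*n) (int n + \<bar>d\<bar>)"
proof (cases "d \<ge> 0")
  case True then show ?thesis by simp
next
  case False
  define e where "e = nat (-d)"
  have d: "d = - int e" using False e_def by simp
  have R: "bc (2*n) (int n + \<bar>d\<bar>) = real ((2*n) choose (n+e))"
    using d by (simp add: bc_def) (metis nat_int of_nat_add)
  show ?thesis
  proof (cases "e \<le> n")
    case True
    have "(2*n) choose (n - e) = (2*n) choose (2*n - (n - e))"
      by (rule binomial_symmetric) simp
    moreover have "2*n - (n-e) = n + e" using True by simp
    moreover have "bc (2*n) (int n + d) = real ((2*n) choose (n - e))"
      using True d by (simp add: bc_def) (metis nat_int of_nat_diff)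
    ultimately show ?thesis using R by simp
  next
    case False
    then show ?thesis using d R by (simp add: bc_def binomial_eq_0)
  qed
qed

lemma times_binomial_ratio: "Suc k * (m choose Suc k) = (m - k) * (m choose k)"
proof (cases m)
  case 0 then show ?thesis by simp
next
  case (Suc m')
  then show ?thesis using Suc_times_binomial[of k m'] binomial_absorb_comp[of m k]
    by simp
qed

lemma central_ratio: "Suc n * ((2*Suc n) choose Suc n) = 2 * (2*n+1) * ((2*n) choose n)"
proof -
  define A where "A = (Suc (Suc (2*n)) choose Suc n)"
  define B where "B = (Suc (2*n) choose n)"
  define C where "C = ((2*n) choose n)"
  have e1: "Suc n * A = Suc (Suc (2*n)) * B"
    unfolding A_def B_def by (rule Suc_times_binomial)
  have e2: "Suc (2*n) * C = (Suc (2*n) choose Suc n) * Suc n"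
    unfolding C_def by (rule Suc_times_binomial_eq)
  have e3: "Suc (2*n) choose Suc n = B"
    unfolding B_def using binomial_symmetric[of "Suc n" "Suc (2*n)"] by simp
  have "Suc n * (Suc n * A) = Suc n * (Suc (Suc (2*n)) * B)" using e1 by simp
  also have "\<dots> = 2 * Suc n * (B * Suc n)" by (simp add: algebra_simps)
  also have "\<dots> = 2 * Suc n * (Suc (2*n) * C)" using e2 e3 by simp
  also have "\<dots> = Suc n * (2 * (2*n+1) * C)" by (simp add: algebra_simps)
  finally have "Suc n * A = 2 * (2*n+1) * C" by (simp only: mult_cancel1) simp
  moreover have "(2*Suc n) choose Suc n = A" unfolding A_def by simp
  ultimately show ?thesis unfolding C_def by simp
qed

definition ca :: "nat \<Rightarrow> real" where "ca n = real ((2*n) choose n) / 4^n"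

lemma ca_Suc: "ca (Suc n) = ca n * (2 * real n + 1) / (2 * real n + 2)"
proof -
  have "real (Suc n * ((2*Suc n) choose Suc n)) = real (2 * (2*n+1) * ((2*n) choose n))"
    using central_ratio[of n] by (simp only:)
  then have "(real n + 1) * real ((2*Suc n) choose Suc n) = 2 * (2 * real n + 1) * real ((2*n) choose n)"
    by (simp only: of_nat_mult of_nat_Suc of_nat_add of_nat_numeral of_nat_1) (simp add: algebra_simps)
  then have E: "real ((2*Suc n) choose Suc n) = 2 * (2 * real n + 1) * real ((2*n) choose n) / (real n + 1)"
    by (simp add: eq_divide_eq algebra_simps)
  have "ca (Suc n) = real ((2*Suc n) choose Suc n) / 4^(Suc n)" by (simp only: ca_def)
  also have "\<dots> = 2 * (2 * real n + 1) * real ((2*n) choose n) / (real n + 1) / (4 * 4^n)" by (simp only: E power_Suc)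
  also have "\<dots> = (real ((2*n) choose n) / 4^n) * (2 * real n + 1) / (2 * (real n + 1))"
    by (simp add: divide_simps) (simp add: algebra_simps)
  also have "\<dots> = ca n * (2 * real n + 1) / (2 * real n + 2)" unfolding ca_def
    by (simp add: algebra_simps)
  finally show ?thesis .
qed

lemma ca_nonneg: "ca n \<ge> 0" by (simp add: ca_def)

lemma aux3: fixes c a b y :: real assumes "y > 0" "c \<ge> 0" "c^2 * a \<le> 1" "a * b \<le> 4 * y^2" "a \<ge> 0" "b \<ge> 0"
  shows "(c * a / (2*y))^2 * b \<le> 1"
proof -
  have "(c * a / (2*y))^2 * b = (c^2 * a) * (a * b) / (4 * y^2)"
    by (simp add: power_divide power_mult_distrib power2_eq_square algebra_simps)
  also have "\<dots> \<le> 1 * (4 * y^2) / (4 * y^2)"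
    using assms by (intro divide_right_mono mult_mono[of "c^2*a" 1 "a*b" "4*y^2"]) auto
  also have "\<dots> = 1" using assms by simp
  finally show ?thesis .
qed

lemma ca_upper_sq: "(ca n)^2 * (2 * real n + 1) \<le> 1"
proof (induction n)
  case 0 then show ?case by (simp add: ca_def)
next
  case (Suc n)
  have "(ca n * (2 * real n + 1) / (2 * (real n + 1)))^2 * (2 * real n + 3) \<le> 1"
    by (rule aux3) (use Suc ca_nonneg in \<open>auto simp: power2_eq_square algebra_simps\<close>)
  then show ?case by (simp add: ca_Suc algebra_simps)
qed

lemma aux0: fixes c a y :: real assumes "y > 0"
  shows "(c * a / (2*y))^2 * (4*y) = c^2 * a^2 / y"
  using assms by (simp add: power2_eq_square field_simps)
lemma aux1:
  fixes c x :: real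
  assumes "x > 0" "c^2 * (4*x) \<ge> 1"
  shows "(c * (2*x+1) / (2*x+2))^2 * (4*(x+1)) \<ge> 1"
proof -
  have a: "x+1>0" using assms by auto
  have "(c * (2*x+1) / (2*x+2))^2 * (4*(x+1)) = (c * (2*x+1) / (2*(x+1)))^2 * (4*(x+1))"
    by (simp add: algebra_simps)
  also have "\<dots> = c^2 * (2*x+1)^2 / (x+1)" by (rule aux0[OF a])
  also have "c^2 * (2*x+1)^2 \<ge> (1/(4*x)) * (4*x*(x+1))"
  proof (rule mult_mono)
    show "1/(4*x) \<le> c^2" using assms by (simp add: field_simps)
    show "4*x*(x+1) \<le> (2*x+1)^2" by (simp add: power2_eq_square algebra_simps)
  qed (use assms in auto)
  then have "c^2 * (2*x+1)^2 \<ge> x+1" using assms by simp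
  then have "c^2 * (2*x+1)^2 / (x+1) \<ge> 1" using a by simp
  finally show ?thesis .
qed
lemma aux2:
  fixes n e D :: real
  assumes "e + 1 \<le> D" "2*D \<le> n" "1 \<le> n" "0 \<le> e"
  shows "(n - e) / (n+e+1) \<ge> 1 - 2*D/n"
proof -
  have h1: "n * (2*e + 1) \<le> n * (2 * D)" using assms by (intro mult_left_mono) auto
  have eq: "(n - 2*D)*(n+e+1) = n*(n-e) + (n*(2*e+1) - n*(2*D)) - 2*D*(e+1)" by (simp add: algebra_simps)
  have "2*D*(e+1) \<ge> 0" using assms by simp
  then have P: "(n - 2*D)*(n+e+1) \<le> (n-e)*n" using eq h1 by (simp add: algebra_simps)
  have "1 - 2*D/n = (n - 2*D)/n" using assms by (simp add: field_simps)
  also have "\<dots> \<le> (n-e)/(n+e+1)" using P assms by (simp add: divide_simps)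
  finally show ?thesis .
qed

lemma ca_lower_sq: "n \<ge> 1 \<Longrightarrow> (ca n)^2 * (4 * real n) \<ge> 1"
proof (induction n rule: dec_induct)
  case base then show ?case by (simp add: ca_def power2_eq_square)
next
  case (step n)
  have "(ca n * (2 * real n + 1) / (2 * real n + 2))^2 * (4 * (real n + 1)) \<ge> 1"
    by (rule aux1) (use step in auto)
  moreover have "real (Suc n) = real n + 1" by simp
  ultimately show ?case unfolding ca_Suc by (simp add: add.commute)
qed

lemma ca_upper: "ca n \<le> 1 / sqrt (2 * real n + 1)"
proof -
  have "(ca n)^2 \<le> 1 / (2 * real n + 1)" using ca_upper_sq[of n] by (simp add: field_simps)
  then have "ca n \<le> sqrt (1 / (2 * real n + 1))" by (rule real_le_rsqrt)
  then show ?thesis by (simp add: real_sqrt_divide)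
qed

lemma ca_lower: "n \<ge> 1 \<Longrightarrow> ca n \<ge> 1 / (2 * sqrt (real n))"
proof -
  assume n: "n \<ge> 1"
  have "1 / (4 * real n) \<le> (ca n)^2" using ca_lower_sq[OF n] n by (simp add: field_simps)
  then have "sqrt (1 / (4 * real n)) \<le> sqrt ((ca n)^2)" by (rule real_sqrt_le_mono)
  then have "sqrt (1 / (4 * real n)) \<le> ca n" using ca_nonneg[of n] by simp
  moreover have "sqrt (1 / (4 * real n)) = 1 / (2 * sqrt (real n))"
    by (simp add: real_sqrt_divide real_sqrt_mult)
  ultimately show ?thesis by simp
qed

lemma sqrt_step: "t \<ge> 1 \<Longrightarrow> sqrt (2 * real t - 1) + 1 / sqrt (2 * real t + 1) \<le> sqrt (2 * real t + 1)"
proof -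
  assume t: "t \<ge> 1"
  define y where "y = sqrt (2 * real t + 1)"
  have y1: "y \<ge> 1" using t by (simp add: y_def)
  have ysq: "y^2 = 2 * real t + 1" by (simp add: y_def)
  have "(y - 1/y)^2 = y^2 - 2 + 1/y^2" using y1 by (simp add: power2_eq_square field_simps)
  also have "\<dots> \<ge> y^2 - 2" by simp
  finally have "2 * real t - 1 \<le> (y - 1/y)^2" using ysq by simp
  moreover have "y - 1/y \<ge> 0"
  proof -
    have "1/y \<le> 1" using y1 by simp
    then show ?thesis using y1 by linarith
  qed
  ultimately have "sqrt (2 * real t - 1) \<le> y - 1/y" by (simp add: real_le_lsqrt)
  then show ?thesis by (simp add: y_def)
qed

lemma sum_inv_sqrt: "t \<ge> 1 \<Longrightarrow> (\<Sum>n<t. 1 / sqrt (2 * real n + 1)) \<le> sqrt (2 * real t - 1)"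
proof (induction t rule: dec_induct)
  case base then show ?case by simp
next
  case (step t)
  have "(\<Sum>n<Suc t. 1 / sqrt (2 * real n + 1)) = (\<Sum>n<t. 1 / sqrt (2 * real n + 1)) + 1 / sqrt (2 * real t + 1)"
    by simp
  also have "\<dots> \<le> sqrt (2 * real t - 1) + 1 / sqrt (2 * real t + 1)"
    using step by simp
  also have "\<dots> \<le> sqrt (2 * real t + 1)" using sqrt_step[OF step(1)] by simp
  also have "\<dots> = sqrt (2 * real (Suc t) - 1)" by simp
  finally show ?case .
qed

lemma binom_lower_aux:
  fixes e D n :: nat
  assumes "e \<le> D" "2*D \<le> n" "1 \<le> n"
  shows "real ((2*n) choose (n+e)) \<ge> real ((2*n) choose n) * (1 - 2 * real D / real n)^e"
  using assms(1)
proof (induction e)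
  case 0 then show ?case by simp
next
  case (Suc e)
  define x where "x = 2*real D/n"
  have x1: "1 - x \<ge> 0" using assms by (simp add: x_def field_simps)
  have IH: "real ((2*n) choose (n+e)) \<ge> real ((2*n) choose n) * (1-x)^e"
    using Suc by (simp add: x_def)
  have r0: "Suc (n+e) * ((2*n) choose Suc (n+e)) = (2*n - (n+e)) * ((2*n) choose (n+e))"
    by (rule times_binomial_ratio)
  have r: "real (Suc (n+e)) * real ((2*n) choose Suc (n+e)) = real (n - e) * real ((2*n) choose (n+e))"
    using r0 by (metis diff_add_inverse2 diff_diff_left mult_2 of_nat_mult)
  have ne: "real (n - e) = real n - e" using Suc assms by simp
  have fac: "real (n - e) / (real n + real e + 1) \<ge> 1 - x"
    using aux2[of "real e" "real D" "real n"] Suc assms unfolding ne x_def by simp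
  have "real ((2*n) choose (n + Suc e)) = real ((2*n) choose (n+e)) * (real (n-e) / (real n + real e + 1))"
    using r by (simp add: field_simps)
  also have "\<dots> \<ge> real ((2*n) choose n) * (1-x)^e * (1-x)"
    by (rule mult_mono[OF IH fac]) (use x1 in auto)
  finally show ?case by (simp add: x_def mult_ac)
qed

lemma bc_lower:
  fixes D n :: nat
  assumes "\<bar>d\<bar> \<le> int D" "4*D^2 \<le> n" "1 \<le> D"
  shows "bc (2*n) (int n + d) \<ge> real ((2*n) choose n) / 2"
proof -
  define e where "e = nat \<bar>d\<bar>"
  have eD: "e \<le> D" using assms(1) e_def by simp
  have DD: "D \<le> D*D" using assms(3) by simp
  have n2: "2*D \<le> n" using DD assms(2) unfolding power2_eq_square by linarith
  have n1: "1 \<le> n" using n2 assms(3) by simp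
  have ie: "int n + \<bar>d\<bar> = int (n + e)" by (simp add: e_def)
  have "bc (2*n) (int n + d) = real ((2*n) choose (n+e))"
    by (subst bc_sym) (simp only: ie bc_def nat_int, simp)
  also have "\<dots> \<ge> real ((2*n) choose n) * (1 - 2 * real D / real n)^e"
    by (rule binom_lower_aux[OF eD n2 n1])
  finally have A: "bc (2*n) (int n + d) \<ge> real ((2*n) choose n) * (1 - 2 * real D / real n)^e" .
  have "- 1 \<le> - 2 * real D / real n" using n2 n1 by (simp add: field_simps)
  then have "(1 + (- 2 * real D / real n))^e \<ge> 1 + e * (- 2 * real D / real n)"
    by (rule Bernoulli_inequality)
  moreover have "1 + e * (- 2 * real D / real n) \<ge> 1/2"
  proof -
    have "real e * real D \<le> real D * real D" using eD by (intro mult_right_mono) auto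
    then have "real e * (2*D) \<le> 2 * D^2" by (simp add: power2_eq_square)
    also have "\<dots> \<le> n/2"
    proof -
      have "real (4*D^2) \<le> real n" using assms(2) by (rule of_nat_mono)
      then show ?thesis by simp
    qed
    finally show ?thesis using n1 by (simp add: field_simps)
  qed
  ultimately have "(1 - 2 * real D / real n)^e \<ge> 1/2" by simp
  then have "real ((2*n) choose n) * (1 - 2 * real D / real n)^e \<ge> real ((2*n) choose n) * (1/2)"
    by (rule mult_left_mono) auto
  with A show ?thesis by linarith
qed

lemma bc_central: "bc (2*n) (int n) = real ((2*n) choose n)"
  by (simp add: bc_def)

lemma cf_var_upper: assumes "t \<ge> 16" shows "cf t 0 \<le> sqrt (real t)"
proof -
  have "(\<Sum>n<t. bc (2*n) (int n + 0) / 4^n) = (\<Sum>n<t. ca n)"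
    by (simp add: bc_central ca_def)
  also have "\<dots> \<le> (\<Sum>n<t. 1 / sqrt (2 * real n + 1))"
    by (rule sum_mono) (rule ca_upper)
  also have "\<dots> \<le> sqrt (2 * real t - 1)" using sum_inv_sqrt[of t] assms by simp
  also have "\<dots> \<le> sqrt (2 * real t)" by simp
  also have "\<dots> = sqrt 2 * sqrt (real t)" by (simp add: real_sqrt_mult)
  also have "\<dots> \<le> 3/2 * sqrt (real t)"
  proof (rule mult_right_mono)
    have "sqrt 2 \<le> sqrt ((3/2)^2)" by (simp add: power2_eq_square)
    then show "sqrt 2 \<le> 3/2" by simp
  qed simp
  finally have S: "(\<Sum>n<t. bc (2*n) (int n + 0) / 4^n) \<le> 3/2 * sqrt (real t)" .
  have "sqrt (4^2) \<le> sqrt (real t)" by (rule real_sqrt_le_mono) (use assms in simp)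
  then have "4 \<le> sqrt (real t)" by simp
  then show ?thesis using S unfolding cf_def by simp
qed

lemma cf_cov_le_var: "cf t d \<le> cf t 0"
  unfolding cf_def
  by (simp add: bc_central sum_mono divide_right_mono bc_le_central)

lemma cf_cov_lower:
  fixes D :: nat
  assumes "\<bar>d\<bar> \<le> int D" "1 \<le> D" "2 * (4 * D^2) \<le> t"
  shows "cf t d \<ge> sqrt (real t) / 50"
proof -
  define N where "N = 4 * D^2"
  have N1: "1 \<le> N" using assms(2) unfolding N_def by simp
  have Nt: "2 * N \<le> t" using assms(3) N_def by simp
  have tpos: "real t > 0" using N1 Nt by simp
  have st: "sqrt (real t) > 0" using tpos by simp
  have "(\<Sum>n<t. bc (2*n) (int n + d) / 4^n) \<ge> (\<Sum>n\<in>{N..<t}. bc (2*n) (int n + d) / 4^n)"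
    by (rule sum_mono2) (auto simp: bc_nonneg)
  moreover have "(\<Sum>n\<in>{N..<t}. bc (2*n) (int n + d) / 4^n) \<ge> (\<Sum>n\<in>{N..<t}. 1 / (4 * sqrt (real t)))"
  proof (rule sum_mono)
    fix n assume n: "n \<in> {N..<t}"
    have n1: "1 \<le> n" using n N1 by simp
    have "bc (2*n) (int n + d) \<ge> real ((2*n) choose n) / 2"
      by (rule bc_lower[OF assms(1) _ assms(2)]) (use n N_def in simp)
    then have "(real ((2*n) choose n) / 2) / 4^n \<le> bc (2*n) (int n + d) / 4^n"
      by (rule divide_right_mono) simp
    moreover have "ca n / 2 = (real ((2*n) choose n) / 2) / 4^n" by (simp add: ca_def)
    ultimately have "bc (2*n) (int n + d) / 4^n \<ge> ca n / 2" by simp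
    moreover have "ca n \<ge> 1 / (2 * sqrt (real n))" by (rule ca_lower[OF n1])
    moreover have "1 / (2 * sqrt (real n)) \<ge> 1 / (2 * sqrt (real t))"
      using n n1 by (simp add: frac_le)
    ultimately show "1 / (4 * sqrt (real t)) \<le> bc (2*n) (int n + d) / 4^n" by simp
  qed
  moreover have "(\<Sum>n\<in>{N..<t}. 1 / (4 * sqrt (real t))) = real (t - N) / (4 * sqrt (real t))"
    by simp
  moreover have "real (t - N) \<ge> real t / 2" using Nt by simp
  then have "(real t / 2) / (4 * sqrt (real t)) \<le> real (t - N) / (4 * sqrt (real t))"
    by (rule divide_right_mono) (use st in simp)
  ultimately have "(\<Sum>n<t. bc (2*n) (int n + d) / 4^n) \<ge> (real t / 2) / (4 * sqrt (real t))"
    by linarith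
  moreover have "(real t / 2) / (4 * sqrt (real t)) = sqrt (real t) / 8"
    using st tpos by (simp add: field_simps)
  ultimately have "(\<Sum>n<t. bc (2*n) (int n + d) / 4^n) \<ge> sqrt (real t) / 8" by simp
  then show ?thesis unfolding cf_def using st by linarith
qed



lemma abs_mult_le_sq: "\<bar>(a::real) * b\<bar> \<le> a^2 + b^2"
proof -
  have "0 \<le> (\<bar>a\<bar> - \<bar>b\<bar>)^2" by simp
  then have "2 * (\<bar>a\<bar> * \<bar>b\<bar>) \<le> a^2 + b^2" by (simp add: power2_eq_square algebra_simps)
  moreover have "0 \<le> \<bar>a\<bar> * \<bar>b\<bar>" by simp
  ultimately show ?thesis unfolding abs_mult by linarith
qed

locale gbm = prob_space M for M :: "'s measure" +
  fixes Z :: "((int \<times> int) \<times> bool) option \<Rightarrow> 's \<Rightarrow> real"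
    and X :: "int \<times> int \<Rightarrow> 's \<Rightarrow> real"
  assumes model: "gaussian_broadcast_HS2 M Z X"
begin

abbreviation "I \<equiv> HS2_noise_index"

lemma ind: "indep_vars (\<lambda>_. borel) Z I"
  using model by (simp add: gaussian_broadcast_HS2_def)

lemma dist: "k \<in> I \<Longrightarrow> distributed M lborel (Z k) std_normal_density"
  using model by (simp add: gaussian_broadcast_HS2_def)

lemma X_base: "a + b = 0 \<Longrightarrow> X (a,b) = Z None"
  using model by (simp add: gaussian_broadcast_HS2_def)

lemma X_rec: "a + b \<ge> 1 \<Longrightarrow> X (a,b) = (\<lambda>\<omega>. (1/2) *
            ((X (a-1,b) \<omega> + Z (Some ((a,b),True)) \<omega>) +
             (X (a,b-1) \<omega> + Z (Some ((a,b),False)) \<omega>)))"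
  using model by (auto simp: gaussian_broadcast_HS2_def)

lemma None_I: "None \<in> I" by (simp add: HS2_noise_index_def)
lemma Some_I: "fst w + snd w \<ge> 1 \<Longrightarrow> Some (w, c) \<in> I"
  by (cases w) (auto simp: HS2_noise_index_def)

lemma Z_meas: "k \<in> I \<Longrightarrow> Z k \<in> borel_measurable M"
  using distributed_measurable[OF dist] by simp

lemma Z_sq_int: "k \<in> I \<Longrightarrow> integrable M (\<lambda>x. (Z k x)^2)"
  using distributed_integrable[OF dist, of k "\<lambda>x. x^2"] integrable_std_normal_moment[of 2]
  by simp

lemma Z_sq: "k \<in> I \<Longrightarrow> (\<integral>x. (Z k x)^2 \<partial>M) = 1"
  using distributed_integral[OF dist, of k "\<lambda>x. x^2"] integral_std_normal_moment_even[of 1]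
  by simp

lemma Z_mean: "k \<in> I \<Longrightarrow> (\<integral>x. Z k x \<partial>M) = 0"
  using standard_normal_distributed_expectation[OF dist] by simp

definition L2 :: "('s \<Rightarrow> real) \<Rightarrow> bool" where
  "L2 f \<longleftrightarrow> f \<in> borel_measurable M \<and> integrable M (\<lambda>x. (f x)^2)"

lemma L2_int: "L2 f \<Longrightarrow> integrable M f"
  unfolding L2_def by (blast intro: square_integrable_imp_integrable)

lemma L2_mult: "L2 f \<Longrightarrow> L2 g \<Longrightarrow> integrable M (\<lambda>x. f x * g x)"
  unfolding L2_def
  by (rule Bochner_Integration.integrable_bound[where f="\<lambda>x. (f x)^2 + (g x)^2"]) (auto intro: abs_mult_le_sq)

lemma L2_add: "L2 f \<Longrightarrow> L2 g \<Longrightarrow> L2 (\<lambda>x. f x + g x)"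
proof -
  assume f: "L2 f" and g: "L2 g"
  have "(\<lambda>x. (f x + g x)^2) = (\<lambda>x. (f x)^2 + 2 * (f x * g x) + (g x)^2)"
    by (simp add: power2_eq_square algebra_simps)
  moreover have "integrable M (\<lambda>x. (f x)^2 + 2 * (f x * g x) + (g x)^2)"
    using f g L2_mult[OF f g] unfolding L2_def by auto
  ultimately show ?thesis using f g unfolding L2_def by auto
qed

lemma L2_scale: "L2 f \<Longrightarrow> L2 (\<lambda>x. c * f x)"
  unfolding L2_def by (auto simp: power_mult_distrib)

lemma Z_L2: "k \<in> I \<Longrightarrow> L2 (Z k)"
  unfolding L2_def using Z_meas Z_sq_int by auto

lemma Z_orth: "k \<in> I \<Longrightarrow> l \<in> I \<Longrightarrow> k \<noteq> l \<Longrightarrow> (\<integral>x. Z k x * Z l x \<partial>M) = 0"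
proof -
  assume k: "k \<in> I" and l: "l \<in> I" and kl: "k \<noteq> l"
  have "indep_vars (\<lambda>_. borel) Z {k, l}"
    by (rule indep_vars_subset[OF ind]) (use k l in auto)
  then have "(\<integral>x. (\<Prod>i\<in>{k,l}. Z i x) \<partial>M) = (\<Prod>i\<in>{k,l}. \<integral>x. Z i x \<partial>M)"
    by (intro indep_vars_lebesgue_integral) (use k l L2_int Z_L2 in auto)
  then show ?thesis using kl Z_mean[OF k] by simp
qed

lemma Z_inner: "k \<in> I \<Longrightarrow> l \<in> I \<Longrightarrow> (\<integral>x. Z k x * Z l x \<partial>M) = (if k = l then 1 else 0)"
  using Z_orth Z_sq by (auto simp: power2_eq_square)


lemma ip_lin_left:
  assumes "L2 f1" "L2 f2" "L2 f3" "L2 f4" "L2 g"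
  shows "(\<integral>\<omega>. (1/2) * ((f1 \<omega> + f2 \<omega>) + (f3 \<omega> + f4 \<omega>)) * g \<omega> \<partial>M) =
    (1/2) * ((\<integral>\<omega>. f1 \<omega> * g \<omega> \<partial>M) + (\<integral>\<omega>. f2 \<omega> * g \<omega> \<partial>M) + (\<integral>\<omega>. f3 \<omega> * g \<omega> \<partial>M) + (\<integral>\<omega>. f4 \<omega> * g \<omega> \<partial>M))"
proof -
  have i: "integrable M (\<lambda>\<omega>. f1 \<omega> * g \<omega>)" "integrable M (\<lambda>\<omega>. f2 \<omega> * g \<omega>)"
     "integrable M (\<lambda>\<omega>. f3 \<omega> * g \<omega>)" "integrable M (\<lambda>\<omega>. f4 \<omega> * g \<omega>)"
    using assms L2_mult by auto
  have "(\<lambda>\<omega>. (1/2) * ((f1 \<omega> + f2 \<omega>) + (f3 \<omega> + f4 \<omega>)) * g \<omega>) =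
        (\<lambda>\<omega>. (1/2) * (((f1 \<omega> * g \<omega> + f2 \<omega> * g \<omega>) + f3 \<omega> * g \<omega>) + f4 \<omega> * g \<omega>))"
    by (rule ext) (simp add: algebra_simps)
  then show ?thesis using i by (simp add: integral_add)
qed

lemma ip_lin_right:
  assumes "L2 f1" "L2 f2" "L2 f3" "L2 f4" "L2 g"
  shows "(\<integral>\<omega>. g \<omega> * ((1/2) * ((f1 \<omega> + f2 \<omega>) + (f3 \<omega> + f4 \<omega>))) \<partial>M) =
    (1/2) * ((\<integral>\<omega>. g \<omega> * f1 \<omega> \<partial>M) + (\<integral>\<omega>. g \<omega> * f2 \<omega> \<partial>M) + (\<integral>\<omega>. g \<omega> * f3 \<omega> \<partial>M) + (\<integral>\<omega>. g \<omega> * f4 \<omega> \<partial>M))"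
  using ip_lin_left[OF assms] by (simp add: mult.commute)

lemma X_props:
  "\<forall>a b. a + b = int t \<longrightarrow> L2 (X (a,b)) \<and>
      (\<forall>w c. fst w + snd w > int t \<longrightarrow> (\<integral>\<omega>. X (a,b) \<omega> * Z (Some (w,c)) \<omega> \<partial>M) = 0)"
proof (induction t)
  case 0
  show ?case
  proof (intro allI impI conjI)
    fix a b :: int assume ab: "a + b = int 0"
    then show "L2 (X (a,b))" using X_base Z_L2[OF None_I] by simp
    fix w :: "int \<times> int" and c assume "fst w + snd w > int 0"
    then have "Some (w,c) \<in> I" by (intro Some_I) simp
    then show "(\<integral>\<omega>. X (a,b) \<omega> * Z (Some (w,c)) \<omega> \<partial>M) = 0"
      using ab X_base Z_orth[OF None_I] by simp
  qed
next
  case (Suc t)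
  show ?case
  proof (intro allI impI conjI)
    fix a b :: int assume ab: "a + b = int (Suc t)"
    have r1: "a - 1 + b = int t" "a + (b - 1) = int t" using ab by auto
    have A1: "L2 (X (a-1,b)) \<and> (\<forall>w c. fst w + snd w > int t \<longrightarrow> (\<integral>\<omega>. X (a-1,b) \<omega> * Z (Some (w,c)) \<omega> \<partial>M) = 0)"
      using Suc.IH r1(1) by blast
    have A2: "L2 (X (a,b-1)) \<and> (\<forall>w c. fst w + snd w > int t \<longrightarrow> (\<integral>\<omega>. X (a,b-1) \<omega> * Z (Some (w,c)) \<omega> \<partial>M) = 0)"
      using Suc.IH r1(2) by blast
    have IH1: "L2 (X (a-1,b))" "L2 (X (a,b-1))" using A1 A2 by auto
    have ZT: "Some ((a,b),True) \<in> I" "Some ((a,b),False) \<in> I" using ab by (auto intro: Some_I)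
    have XR: "X (a,b) = (\<lambda>\<omega>. (1/2) *
            ((X (a-1,b) \<omega> + Z (Some ((a,b),True)) \<omega>) +
             (X (a,b-1) \<omega> + Z (Some ((a,b),False)) \<omega>)))"
      using ab by (intro X_rec) simp
    show "L2 (X (a,b))" unfolding XR
      using IH1 ZT by (intro L2_scale L2_add Z_L2) auto
    fix w :: "int \<times> int" and c assume w: "fst w + snd w > int (Suc t)"
    then have e: "Some (w,c) \<in> I" by (intro Some_I) simp
    have "fst w + snd w > int t" using w by simp
    have n1: "Some ((a,b),True) \<noteq> Some (w,c)" "Some ((a,b),False) \<noteq> Some (w,c)"
      using w ab by auto
    have z: "(\<integral>\<omega>. X (a-1,b) \<omega> * Z (Some (w,c)) \<omega> \<partial>M) = 0"
      "(\<integral>\<omega>. X (a,b-1) \<omega> * Z (Some (w,c)) \<omega> \<partial>M) = 0"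
      using conjunct2[OF A1] conjunct2[OF A2] \<open>fst w + snd w > int t\<close> by blast+
    show "(\<integral>\<omega>. X (a,b) \<omega> * Z (Some (w,c)) \<omega> \<partial>M) = 0"
      unfolding XR
      apply (subst ip_lin_left)
      using IH1 ZT e Z_L2 z Z_orth[OF ZT(1) e n1(1)] Z_orth[OF ZT(2) e n1(2)] by auto
  qed
qed

lemma X_L2: "a + b \<ge> 0 \<Longrightarrow> L2 (X (a,b))"
  using X_props[of "nat (a+b)"] by auto

lemma X_Z: "a + b \<ge> 0 \<Longrightarrow> fst w + snd w > a + b \<Longrightarrow> (\<integral>\<omega>. X (a,b) \<omega> * Z (Some (w,c)) \<omega> \<partial>M) = 0"
  using X_props[of "nat (a+b)"] by (cases w) auto

lemma X_cov:
  "\<forall>a b a' b'. a + b = int t \<longrightarrow> a' + b' = int t \<longrightarrow>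
      (\<integral>\<omega>. X (a,b) \<omega> * X (a',b') \<omega> \<partial>M) = cf t (a - a')"
proof (induction t)
  case 0
  show ?case using X_base Z_inner[OF None_I None_I] by (simp add: cf_0)
next
  case (Suc t)
  show ?case
  proof (intro allI impI)
    fix a b a' b' :: int assume ab: "a + b = int (Suc t)" and ab': "a' + b' = int (Suc t)"
    have r1: "a - 1 + b = int t" "a + (b - 1) = int t" "a' - 1 + b' = int t" "a' + (b' - 1) = int t"
      using ab ab' by auto
    have L: "L2 (X (a-1,b))" "L2 (X (a,b-1))" "L2 (X (a'-1,b'))" "L2 (X (a',b'-1))"
      using r1 X_L2 by auto
    have ZT: "Some ((a,b),True) \<in> I" "Some ((a,b),False) \<in> I"
      "Some ((a',b'),True) \<in> I" "Some ((a',b'),False) \<in> I" using ab ab' by (auto intro: Some_I)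
    note ZL = Z_L2[OF ZT(1)] Z_L2[OF ZT(2)] Z_L2[OF ZT(3)] Z_L2[OF ZT(4)]
    have XR: "X (a,b) = (\<lambda>\<omega>. (1/2) *
            ((X (a-1,b) \<omega> + Z (Some ((a,b),True)) \<omega>) +
             (X (a,b-1) \<omega> + Z (Some ((a,b),False)) \<omega>)))"
      using ab by (intro X_rec) simp
    have XR': "X (a',b') = (\<lambda>\<omega>. (1/2) *
            ((X (a'-1,b') \<omega> + Z (Some ((a',b'),True)) \<omega>) +
             (X (a',b'-1) \<omega> + Z (Some ((a',b'),False)) \<omega>)))"
      using ab' by (intro X_rec) simp
    have LX': "L2 (X (a',b'))" using ab' X_L2 by simp
    define d where "d = a - a'"
    have XX: "(\<integral>\<omega>. X (a-1,b) \<omega> * X (a'-1,b') \<omega> \<partial>M) = cf t d"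
      "(\<integral>\<omega>. X (a-1,b) \<omega> * X (a',b'-1) \<omega> \<partial>M) = cf t (d-1)"
      "(\<integral>\<omega>. X (a,b-1) \<omega> * X (a'-1,b') \<omega> \<partial>M) = cf t (d+1)"
      "(\<integral>\<omega>. X (a,b-1) \<omega> * X (a',b'-1) \<omega> \<partial>M) = cf t d"
      using Suc.IH[rule_format, OF r1(1) r1(3)] Suc.IH[rule_format, OF r1(1) r1(4)]
        Suc.IH[rule_format, OF r1(2) r1(3)] Suc.IH[rule_format, OF r1(2) r1(4)]
      unfolding d_def by (simp_all add: algebra_simps)
    have XZ: "(\<integral>\<omega>. X (a-1,b) \<omega> * Z (Some ((a',b'),c)) \<omega> \<partial>M) = 0"
      "(\<integral>\<omega>. X (a,b-1) \<omega> * Z (Some ((a',b'),c)) \<omega> \<partial>M) = 0" for c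
      using X_Z r1 ab' by auto
    have ZX: "(\<integral>\<omega>. Z (Some ((a,b),c)) \<omega> * X (a'-1,b') \<omega> \<partial>M) = 0"
      "(\<integral>\<omega>. Z (Some ((a,b),c)) \<omega> * X (a',b'-1) \<omega> \<partial>M) = 0" for c
      using X_Z[of "a'-1" b' "(a,b)" c] X_Z[of a' "b'-1" "(a,b)" c] r1 ab by (auto simp: mult.commute)
    have eq: "(a,b) = (a',b') \<longleftrightarrow> d = 0" using ab ab' unfolding d_def by auto
    have ZZ: "(\<integral>\<omega>. Z (Some ((a,b),c)) \<omega> * Z (Some ((a',b'),c')) \<omega> \<partial>M) =
        (if d = 0 \<and> c = c' then 1 else 0)" for c c'
    proof -
      have m: "Some ((a,b),c) \<in> I" "Some ((a',b'),c') \<in> I" using ab ab' by (auto intro!: Some_I)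
      show ?thesis using Z_inner[OF m] eq by auto
    qed
    have "(\<integral>\<omega>. X (a,b) \<omega> * X (a',b') \<omega> \<partial>M) =
      (1/2) * ((\<integral>\<omega>. X (a-1,b) \<omega> * X (a',b') \<omega> \<partial>M) + (\<integral>\<omega>. Z (Some ((a,b),True)) \<omega> * X (a',b') \<omega> \<partial>M)
        + (\<integral>\<omega>. X (a,b-1) \<omega> * X (a',b') \<omega> \<partial>M) + (\<integral>\<omega>. Z (Some ((a,b),False)) \<omega> * X (a',b') \<omega> \<partial>M))"
      unfolding XR by (rule ip_lin_left) (use L ZL LX' in auto)
    also have "\<dots> = (cf t (d-1) + 2 * cf t d + cf t (d+1)) / 4 + (if d = 0 then 1/2 else 0)"
      unfolding XR'
      apply (subst ip_lin_right, (use L ZL in auto)[5])+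
      using XX XZ ZX ZZ by (simp add: field_simps)
    also have "\<dots> = cf (Suc t) (a - a')" unfolding d_def by (simp add: cf_Suc)
    finally show "(\<integral>\<omega>. X (a,b) \<omega> * X (a',b') \<omega> \<partial>M) = cf (Suc t) (a - a')" .
  qed
qed


lemma X_mean: "\<forall>a b. a + b = int t \<longrightarrow> (\<integral>\<omega>. X (a,b) \<omega> \<partial>M) = 0"
proof (induction t)
  case 0 then show ?case using X_base Z_mean[OF None_I] by simp
next
  case (Suc t)
  show ?case
  proof (intro allI impI)
    fix a b :: int assume ab: "a + b = int (Suc t)"
    have r1: "a - 1 + b = int t" "a + (b - 1) = int t" using ab by auto
    have ZT: "Some ((a,b),True) \<in> I" "Some ((a,b),False) \<in> I" using ab by (auto intro: Some_I)
    have XR: "X (a,b) = (\<lambda>\<omega>. (1/2) *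
            ((X (a-1,b) \<omega> + Z (Some ((a,b),True)) \<omega>) +
             (X (a,b-1) \<omega> + Z (Some ((a,b),False)) \<omega>)))"
      using ab by (intro X_rec) simp
    have i: "integrable M (X (a-1,b))" "integrable M (X (a,b-1))"
      "integrable M (Z (Some ((a,b),True)))" "integrable M (Z (Some ((a,b),False)))"
      using X_L2 r1 Z_L2 ZT L2_int by auto
    have m: "(\<integral>\<omega>. X (a-1,b) \<omega> \<partial>M) = 0" "(\<integral>\<omega>. X (a,b-1) \<omega> \<partial>M) = 0"
      using Suc.IH r1 by blast+
    show "(\<integral>\<omega>. X (a,b) \<omega> \<partial>M) = 0"
      unfolding XR using i m Z_mean[OF ZT(1)] Z_mean[OF ZT(2)] by simp
  qed
qed

end

theorem lemmal:
  fixes M :: "'s measure"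
    and Z :: "((int \<times> int) \<times> bool) option \<Rightarrow> 's \<Rightarrow> real"
    and X :: "int \<times> int \<Rightarrow> 's \<Rightarrow> real"
    and m t :: nat and i j :: int
  assumes model: "gaussian_broadcast_HS2 M Z X"
    and m_ge: "m \<ge> 2^5"
    and t_ge: "t \<ge> 2^11 * m^3"
    and ij: "\<bar>i - j\<bar> \<le> 2 * int m"
  shows "sqrt (real t) \<ge> prob_space.variance M (X (i, int t - i))
       \<and> prob_space.variance M (X (i, int t - i)) \<ge> covariance M (X (i, int t - i)) (X (j, int t - j))
       \<and> covariance M (X (i, int t - i)) (X (j, int t - j)) \<ge> sqrt (real t) / 50"
proof -
  have ps: "prob_space M" using model by (simp add: gaussian_broadcast_HS2_def)
  interpret g: gbm M Z X using ps model by (simp add: gbm_def gbm_axioms_def)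
  have r: "i + (int t - i) = int t" "j + (int t - j) = int t" by simp_all
  have mi: "(\<integral>\<omega>. X (i, int t - i) \<omega> \<partial>M) = 0" "(\<integral>\<omega>. X (j, int t - j) \<omega> \<partial>M) = 0"
    using g.X_mean r by blast+
  have V: "prob_space.variance M (X (i, int t - i)) = cf t 0"
    using g.X_cov[rule_format, OF r(1) r(1)] mi by (simp add: power2_eq_square)
  have C: "covariance M (X (i, int t - i)) (X (j, int t - j)) = cf t (i - j)"
    using g.X_cov[rule_format, OF r(1) r(2)] mi by (simp add: covariance_def)
  have m1: "1 \<le> m" using m_ge by simp
  have "m^2 \<le> m^3" using m1 by (simp add: power_increasing)
  then have "32 * m^2 \<le> 2^11 * m^3" by simp
  then have t32: "32 * m^2 \<le> t" using t_ge by linarith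
  have t16: "16 \<le> t"
  proof -
    have "1 \<le> m^2" using m1 by simp
    then show ?thesis using t32 by linarith
  qed
  have "cf t (i - j) \<ge> sqrt (real t) / 50"
  proof (rule cf_cov_lower[of _ "2*m"])
    show "\<bar>i - j\<bar> \<le> int (2*m)" using ij by simp
    show "1 \<le> 2*m" using m1 by simp
    show "2 * (4 * (2*m)^2) \<le> t" using t32 by (simp add: power_mult_distrib)
  qed
  then show ?thesis using V C cf_var_upper[OF t16] cf_cov_le_var[of t "i-j"] by simp
qed

end
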